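(* Let $G$ be a topological group and $A$ a topological $G$-module. For every $p$, the homomorphism $H(j_h^p)^{-1}\circ H(j_v^p)\colon H_c^p(G,A)\to H_{lc}^p(G,A)$ coincides with the homomorphism induced in cohomology by the inclusion $C_c^*(G,A)\hookrightarrow C_{lc}^*(G,A)$.
   Context: A topological $G$-module is an abelian topological group $A$ with an action of $G$ by group automorphisms such that $G\times A\to A$ is continuous. For an identity neighbourhood $U$ of $G$ put $\Gamma_U^0:=G$ and, for $q\ge1$, $\Gamma_U^q:=\{(g_0,\dots,g_q)\in G^{q+1}\mid g_i^{-1}g_j\in U\ \forall i,j\}$. $G$ acts on maps $f\colon G^{n+1}\to A$ by $(g.f)(g_0,\dots,g_n)=g.f(g^{-1}g_0,\dots,g^{-1}g_n)$, and $df(g_0,\dots,g_{n+1})=\sum_i(-1)^if(g_0,\dots,\widehat{g_i},\dots,g_{n+1})$. $C_c^n(G,A)$ is the complex of continuous equivariant maps $G^{n+1}\to A$ with cohomology $H_c^n(G,A)$; $C_{lc}^n(G,A)$ is the complex of equivariant maps whose restriction to $\Gamma_U^n$ is continuous for some identity neighbourhood $U$, with cohomology $H_{lc}^n(G,A)$. $A_{lc}^{p,q}(G,A)$ is the group of maps $f\colon G^{p+1}\times G^{q+1}\to A$ whose restriction to $G^{p+1}\times\Gamma_U^q$ is continuous for some identity neighbourhood $U$, with $d_hf(x_0,\dots,x_{p+1},\vec y)=\sum_i(-1)^if(x_0,\dots,\widehat{x_i},\dots,x_{p+1},\vec y)$ and $d_vf(\vec x,y_0,\dots,y_{q+1})=(-1)^p\sum_i(-1)^if(\vec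 x,y_0,\dots,\widehat{y_i},\dots,y_{q+1})$; $G$ acts by $(g.f)(\vec x,\vec y)=g.f(g^{-1}\vec x,g^{-1}\vec y)$, and $\mathrm{Tot}\,A_{lc}^{*,*}(G,A)^G$ is the total complex of the fixed-point double complex (differential $d_h+d_v$). $j_h\colon C_{lc}^*(G,A)\to\mathrm{Tot}\,A_{lc}^{*,*}(G,A)^G$, $j_h(f)(x_0,\vec y)=f(\vec y)$, and $j_v\colon C_c^*(G,A)\to\mathrm{Tot}\,A_{lc}^{*,*}(G,A)^G$, $j_v(f)(\vec x,y_0)=f(\vec x)$, are chain maps, and $j_h$ induces an isomorphism $H(j_h^p)$ in cohomology. *)

theory Defs
  imports "HOL-Analysis.Analysis" "HOL-Library.Function_Algebras"
begin

text \<open>The topological group G is the whole type 'g, written additively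
(class group_add, which is NOT assumed commutative): g h is written g + h, g^-1 is - g,
the identity is 0. Tuples (g_0,...,g_n) in G^(n+1) are extensional functions
nat => 'g on the index set {..n}, carrying the product topology.
The abelian topological group A is the whole type 'a; the action is act.\<close>

definition tuples :: "nat \<Rightarrow> (nat \<Rightarrow> 'g) set" where
  "tuples n = PiE {..n} (\<lambda>_. UNIV)"

definition PT :: "nat \<Rightarrow> (nat \<Rightarrow> 'g::topological_space) topology" where
  "PT n = product_topology (\<lambda>_. euclidean) {..n}"

definition identity_nbhd :: "'g::{topological_space,group_add} set \<Rightarrow> bool" where
  "identity_nbhd U \<longleftrightarrow> (\<exists>V. open V \<and> 0 \<in> V \<and> V \<subseteq> U)"

definition Gamma :: "'g::group_add set \<Rightarrow> nat \<Rightarrow> (nat \<Rightarrow> 'g) set" where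
  "Gamma U q = (if q = 0 then tuples 0
      else {y \<in> tuples q. \<forall>i\<le>q. \<forall>j\<le>q. - y i + y j \<in> U})"

definition tmul :: "nat \<Rightarrow> 'g::group_add \<Rightarrow> (nat \<Rightarrow> 'g) \<Rightarrow> (nat \<Rightarrow> 'g)" where
  "tmul n g x = restrict (\<lambda>k. g + x k) {..n}"

text \<open>face map: delete the i-th entry of an (n+2)-tuple, giving an (n+1)-tuple\<close>
definition face :: "nat \<Rightarrow> nat \<Rightarrow> (nat \<Rightarrow> 'g) \<Rightarrow> (nat \<Rightarrow> 'g)" where
  "face n i x = restrict (\<lambda>k. if k < i then x k else x (Suc k)) {..n}"

definition sgnop :: "nat \<Rightarrow> 'a::ab_group_add \<Rightarrow> 'a" where
  "sgnop i a = (if even i then a else - a)"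

definition top_G_module :: "('g::{topological_space,group_add} \<Rightarrow> 'a::{topological_space,ab_group_add} \<Rightarrow> 'a) \<Rightarrow> bool" where
  "top_G_module act \<longleftrightarrow>
     continuous_on UNIV (\<lambda>z::'a\<times>'a. fst z + snd z) \<and> continuous_on UNIV (\<lambda>a::'a. - a) \<and>
     (\<forall>a. act 0 a = a) \<and> (\<forall>g h a. act (g + h) a = act g (act h a)) \<and>
     (\<forall>g a b. act g (a + b) = act g a + act g b) \<and>
     continuous_on UNIV (\<lambda>z::'g\<times>'a. act (fst z) (snd z))"

definition top_group :: "'g::{topological_space,group_add} itself \<Rightarrow> bool" where
  "top_group _ \<longleftrightarrow> continuous_on UNIV (\<lambda>z::'g\<times>'g. fst z + snd z) \<and> continuous_on UNIV (\<lambda>g::'g. - g)"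

definition cdiff :: "nat \<Rightarrow> ((nat \<Rightarrow> 'g) \<Rightarrow> 'a::ab_group_add) \<Rightarrow> ((nat \<Rightarrow> 'g) \<Rightarrow> 'a)" where
  "cdiff n f = (\<lambda>x. if x \<in> tuples (Suc n) then (\<Sum>i\<le>Suc n. sgnop i (f (face n i x))) else 0)"

definition equivariant :: "('g::group_add \<Rightarrow> 'a \<Rightarrow> 'a) \<Rightarrow> nat \<Rightarrow> ((nat \<Rightarrow> 'g) \<Rightarrow> 'a) \<Rightarrow> bool" where
  "equivariant act n f \<longleftrightarrow> (\<forall>g. \<forall>x\<in>tuples n. act g (f (tmul n (- g) x)) = f x)"

definition Cc :: "('g::{topological_space,group_add} \<Rightarrow> 'a::{topological_space,ab_group_add} \<Rightarrow> 'a)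
    \<Rightarrow> nat \<Rightarrow> ((nat \<Rightarrow> 'g) \<Rightarrow> 'a) set" where
  "Cc act n = {f. (\<forall>x. x \<notin> tuples n \<longrightarrow> f x = 0) \<and> equivariant act n f \<and>
                  continuous_map (PT n) euclidean f}"

definition Clc :: "('g::{topological_space,group_add} \<Rightarrow> 'a::{topological_space,ab_group_add} \<Rightarrow> 'a)
    \<Rightarrow> nat \<Rightarrow> ((nat \<Rightarrow> 'g) \<Rightarrow> 'a) set" where
  "Clc act n = {f. (\<forall>x. x \<notin> tuples n \<longrightarrow> f x = 0) \<and> equivariant act n f \<and>
                   (\<exists>U. identity_nbhd U \<and>
                        continuous_map (subtopology (PT n) (Gamma U n)) euclidean f)}"

definition dh :: "nat \<Rightarrow> nat \<Rightarrow> ((nat \<Rightarrow> 'g) \<times> (nat \<Rightarrow> 'g) \<Rightarrow> 'a::ab_group_add)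
    \<Rightarrow> ((nat \<Rightarrow> 'g) \<times> (nat \<Rightarrow> 'g) \<Rightarrow> 'a)" where
  "dh p q f = (\<lambda>(x,y). if x \<in> tuples (Suc p) \<and> y \<in> tuples q
      then (\<Sum>i\<le>Suc p. sgnop i (f (face p i x, y))) else 0)"

definition dv :: "nat \<Rightarrow> nat \<Rightarrow> ((nat \<Rightarrow> 'g) \<times> (nat \<Rightarrow> 'g) \<Rightarrow> 'a::ab_group_add)
    \<Rightarrow> ((nat \<Rightarrow> 'g) \<times> (nat \<Rightarrow> 'g) \<Rightarrow> 'a)" where
  "dv p q f = (\<lambda>(x,y). if x \<in> tuples p \<and> y \<in> tuples (Suc q)
      then sgnop p (\<Sum>i\<le>Suc q. sgnop i (f (x, face q i y))) else 0)"

definition Alc_fix :: "('g::{topological_space,group_add} \<Rightarrow> 'a::{topological_space,ab_group_add} \<Rightarrow> 'a)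
    \<Rightarrow> nat \<Rightarrow> nat \<Rightarrow> ((nat \<Rightarrow> 'g) \<times> (nat \<Rightarrow> 'g) \<Rightarrow> 'a) set" where
  "Alc_fix act p q = {f. (\<forall>z. z \<notin> tuples p \<times> tuples q \<longrightarrow> f z = 0) \<and>
      (\<forall>g. \<forall>x\<in>tuples p. \<forall>y\<in>tuples q. act g (f (tmul p (- g) x, tmul q (- g) y)) = f (x, y)) \<and>
      (\<exists>U. identity_nbhd U \<and>
           continuous_map (subtopology (prod_topology (PT p) (PT q)) (tuples p \<times> Gamma U q)) euclidean f)}"

text \<open>An element of Tot^n is the family of its components F p in bidegree (p, n - p).\<close>
definition Tot :: "('g::{topological_space,group_add} \<Rightarrow> 'a::{topological_space,ab_group_add} \<Rightarrow> 'a)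
    \<Rightarrow> nat \<Rightarrow> (nat \<Rightarrow> (nat \<Rightarrow> 'g) \<times> (nat \<Rightarrow> 'g) \<Rightarrow> 'a) set" where
  "Tot act n = {F. (\<forall>p\<le>n. F p \<in> Alc_fix act p (n - p)) \<and> (\<forall>p>n. F p = 0)}"

definition dTot :: "nat \<Rightarrow> (nat \<Rightarrow> (nat \<Rightarrow> 'g) \<times> (nat \<Rightarrow> 'g) \<Rightarrow> 'a::ab_group_add)
    \<Rightarrow> (nat \<Rightarrow> (nat \<Rightarrow> 'g) \<times> (nat \<Rightarrow> 'g) \<Rightarrow> 'a)" where
  "dTot n F = (\<lambda>p. if p \<le> Suc n then
       (if 1 \<le> p then dh (p - 1) (Suc n - p) (F (p - 1)) else 0)
     + (if p \<le> n then dv p (n - p) (F p) else 0) else 0)"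

definition jh :: "nat \<Rightarrow> ((nat \<Rightarrow> 'g) \<Rightarrow> 'a::zero) \<Rightarrow> (nat \<Rightarrow> (nat \<Rightarrow> 'g) \<times> (nat \<Rightarrow> 'g) \<Rightarrow> 'a)" where
  "jh n f = (\<lambda>p. if p = 0 then (\<lambda>(x,y). if x \<in> tuples 0 \<and> y \<in> tuples n then f y else 0)
                else (\<lambda>_. 0))"

definition jv :: "nat \<Rightarrow> ((nat \<Rightarrow> 'g) \<Rightarrow> 'a::zero) \<Rightarrow> (nat \<Rightarrow> (nat \<Rightarrow> 'g) \<times> (nat \<Rightarrow> 'g) \<Rightarrow> 'a)" where
  "jv n f = (\<lambda>p. if p = n then (\<lambda>(x,y). if x \<in> tuples n \<and> y \<in> tuples 0 then f x else 0)
                else (\<lambda>_. 0))"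

definition cocycles :: "(nat \<Rightarrow> 'c::ab_group_add set) \<Rightarrow> (nat \<Rightarrow> 'c \<Rightarrow> 'c) \<Rightarrow> nat \<Rightarrow> 'c set" where
  "cocycles C d n = {f \<in> C n. d n f = 0}"

definition coboundaries :: "(nat \<Rightarrow> 'c::ab_group_add set) \<Rightarrow> (nat \<Rightarrow> 'c \<Rightarrow> 'c) \<Rightarrow> nat \<Rightarrow> 'c set" where
  "coboundaries C d n = (if n = 0 then {0} else d (n - 1) ` C (n - 1))"

definition coh_class :: "(nat \<Rightarrow> 'c::ab_group_add set) \<Rightarrow> (nat \<Rightarrow> 'c \<Rightarrow> 'c) \<Rightarrow> nat \<Rightarrow> 'c \<Rightarrow> 'c set" where
  "coh_class C d n f = {f + b | b. b \<in> coboundaries C d n}"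

definition cohomology :: "(nat \<Rightarrow> 'c::ab_group_add set) \<Rightarrow> (nat \<Rightarrow> 'c \<Rightarrow> 'c) \<Rightarrow> nat \<Rightarrow> 'c set set" where
  "cohomology C d n = coh_class C d n ` cocycles C d n"

definition induced :: "(nat \<Rightarrow> 'c \<Rightarrow> 'e) \<Rightarrow> (nat \<Rightarrow> 'e::ab_group_add set) \<Rightarrow> (nat \<Rightarrow> 'e \<Rightarrow> 'e)
    \<Rightarrow> nat \<Rightarrow> 'c set \<Rightarrow> 'e set" where
  "induced phi C' d' n c = coh_class C' d' n (phi n (SOME z. z \<in> c))"

end

theory Submission
  imports Defs
begin

definition subgrp :: "'c::ab_group_add set \<Rightarrow> bool" where
  "subgrp B \<longleftrightarrow> 0 \<in> B \<and> (\<forall>u\<in>B. \<forall>v\<in>B. u + v \<in> B) \<and> (\<forall>u\<in>B. - u \<in> B)"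

lemma additive_zero: fixes h :: "'c::ab_group_add \<Rightarrow> 'e::ab_group_add"
  assumes "\<And>u v. h (u + v) = h u + h v" shows "h 0 = 0"
  using assms[of 0 0] by simp

lemma additive_uminus: fixes h :: "'c::ab_group_add \<Rightarrow> 'e::ab_group_add"
  assumes "\<And>u v. h (u + v) = h u + h v" shows "h (- u) = - h u"
proof -
  have "h u + h (- u) = 0" using assms[of u "- u"] additive_zero[of h, OF assms] by simp
  then show ?thesis by (metis add.commute eq_neg_iff_add_eq_0)
qed

lemma cob_subgrp:
  assumes "\<And>n. subgrp (X n)" "\<And>n u v. d n (u + v) = d n u + d n v"
  shows "subgrp (coboundaries X d n)"
proof (cases "n = 0")
  case True then show ?thesis by (simp add: coboundaries_def subgrp_def)
next
  case False
  have z: "d (n-1) 0 = 0" using additive_zero[of "d (n-1)"] assms(2) by blast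
  have u: "d (n-1) (- u) = - d (n-1) u" for u using additive_uminus[of "d (n-1)"] assms(2) by blast
  have S: "subgrp (X (n-1))" by (rule assms(1))
  show ?thesis unfolding coboundaries_def subgrp_def using False
  proof (simp only: if_False, intro conjI ballI)
    show "0 \<in> d (n - 1) ` X (n - 1)" using S z unfolding subgrp_def by (metis image_eqI)
  next
    fix a b assume "a \<in> d (n - 1) ` X (n - 1)" "b \<in> d (n - 1) ` X (n - 1)"
    then obtain u v where "u \<in> X (n-1)" "v \<in> X (n-1)" "a = d (n-1) u" "b = d (n-1) v" by blast
    then show "a + b \<in> d (n - 1) ` X (n - 1)" using S assms(2) unfolding subgrp_def by (metis image_eqI)
  next
    fix a assume "a \<in> d (n - 1) ` X (n - 1)"
    then obtain u where "u \<in> X (n-1)" "a = d (n-1) u" by blast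
    then show "- a \<in> d (n - 1) ` X (n - 1)" using S u unfolding subgrp_def by (metis image_eqI)
  qed
qed

lemma class_shift:
  assumes "subgrp B" "b \<in> B"
  shows "{a + b' |b'. b' \<in> B} = {(a + b) + b' |b'. b' \<in> B}"
proof (intro set_eqI iffI)
  fix x assume "x \<in> {a + b' |b'. b' \<in> B}"
  then obtain b' where "b' \<in> B" "x = a + b'" by blast
  moreover have "- b + b' \<in> B" using assms \<open>b' \<in> B\<close> unfolding subgrp_def by blast
  ultimately show "x \<in> {(a + b) + b' |b'. b' \<in> B}"
    by (intro CollectI exI[of _ "- b + b'"]) (simp add: algebra_simps)
next
  fix x assume "x \<in> {(a + b) + b' |b'. b' \<in> B}"
  then obtain b' where "b' \<in> B" "x = (a + b) + b'" by blast
  moreover have "b + b' \<in> B" using assms \<open>b' \<in> B\<close> unfolding subgrp_def by blast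
  ultimately show "x \<in> {a + b' |b'. b' \<in> B}"
    by (intro CollectI exI[of _ "b + b'"]) (simp add: algebra_simps)
qed

lemma class_shift2:
  assumes "subgrp (coboundaries X d n)" "b \<in> coboundaries X d n" "a' = a + b"
  shows "coh_class X d n a' = coh_class X d n a"
  using class_shift[OF assms(1,2), of a] assms(3) unfolding coh_class_def by simp

lemma class_mem:
  assumes "subgrp (coboundaries X d n)" "a \<in> coh_class X d n a'"
  shows "coh_class X d n a = coh_class X d n a'"
  using assms class_shift2 unfolding coh_class_def by blast

lemma self_mem_class:
  assumes "subgrp (coboundaries X d n)"
  shows "a \<in> coh_class X d n a"
  using assms unfolding coh_class_def subgrp_def by (intro CollectI exI[of _ 0]) simp


lemma mem_tuples: "x \<in> tuples n \<longleftrightarrow> (\<forall>k. n < k \<longrightarrow> x k = undefined)"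
  by (auto simp: tuples_def PiE_def extensional_def)

lemma restrict_tuples[simp]: "restrict f {..n} \<in> tuples n"
  by (simp add: tuples_def)

lemma face_tuples[simp]: "face n i x \<in> tuples n"
  by (simp add: face_def)

lemma tmul_tuples[simp]: "tmul n g x \<in> tuples n"
  by (simp add: tmul_def)

lemma tuples_eqI: "x \<in> tuples n \<Longrightarrow> y \<in> tuples n \<Longrightarrow> (\<And>k. k \<le> n \<Longrightarrow> x k = y k) \<Longrightarrow> x = y"
  unfolding mem_tuples by (metis ext not_le)

lemma sgnop_add: "sgnop i (a + b) = sgnop i a + sgnop i b"
  by (simp add: sgnop_def)
lemma sgnop_uminus: "sgnop i (- a) = - sgnop i a"
  by (simp add: sgnop_def)
lemma sgnop_zero[simp]: "sgnop i 0 = 0"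
  by (simp add: sgnop_def)
lemma sgnop_0[simp]: "sgnop 0 a = a"
  by (simp add: sgnop_def)
lemma sgnop_sgnop: "sgnop i (sgnop j a) = sgnop (i + j) a"
  by (simp add: sgnop_def)
lemma sgnop_Suc: "sgnop (Suc i) a = - sgnop i a"
  by (simp add: sgnop_def)
lemma sgnop_sum: "sgnop i (sum f A) = (\<Sum>x\<in>A. sgnop i (f x))"
  by (simp add: sgnop_def sum_negf)

lemma cdiff_add: "cdiff n (u + v) = cdiff n u + cdiff n v"
  by (auto simp: cdiff_def fun_eq_iff sgnop_add sum.distrib)

lemma dh_add: "dh p q (u + v) = dh p q u + dh p q v"
  by (auto simp: dh_def fun_eq_iff sgnop_add sum.distrib)
lemma dv_add: "dv p q (u + v) = dv p q u + dv p q v"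
  by (auto simp: dv_def fun_eq_iff sgnop_add sum.distrib)
lemma dh_zero[simp]: "dh p q (\<lambda>_. 0) = (\<lambda>_. 0)"
  by (auto simp: dh_def fun_eq_iff)
lemma dv_zero[simp]: "dv p q (\<lambda>_. 0) = (\<lambda>_. 0)"
  by (auto simp: dv_def fun_eq_iff)

lemma dTot_add: "dTot n (U + V) = dTot n U + dTot n V"
  by (auto simp: dTot_def fun_eq_iff dh_add dv_add)

lemma jh_add: "jh n (u + v) = jh n u + jh n (v::(nat\<Rightarrow>'g)\<Rightarrow>'a::ab_group_add)"
  by (auto simp: jh_def fun_eq_iff plus_fun_def)
lemma jv_add: "jv n (u + v) = jv n u + jv n (v::(nat\<Rightarrow>'g)\<Rightarrow>'a::ab_group_add)"
  by (auto simp: jv_def fun_eq_iff plus_fun_def)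

lemma jh_chain: "jh (Suc n) (cdiff n k) = dTot n (jh n k)"
proof (rule ext)
  fix p
  show "jh (Suc n) (cdiff n k) p = dTot n (jh n k) p"
  proof (cases "p = 0")
    case True
    then show ?thesis by (auto simp: jh_def dTot_def dv_def cdiff_def fun_eq_iff)
  next
    case False
    note F = False
    show ?thesis
    proof (cases "p = 1")
      case True
      have "dh 0 n (jh n k 0) = (\<lambda>_. 0)"
        by (auto simp: dh_def jh_def fun_eq_iff sgnop_def)
      moreover have "jh n k 1 = (\<lambda>_. 0)" by (simp add: jh_def)
      ultimately show ?thesis unfolding True by (simp add: jh_def dTot_def zero_fun_def)
    next
      case False
      then have "jh n k (p - 1) = (\<lambda>_. 0)" "jh n k p = (\<lambda>_. 0)" using F by (auto simp: jh_def)
      then have "dTot n (jh n k) p = (\<lambda>_. 0)" unfolding dTot_def by (simp add: zero_fun_def)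
      moreover have "jh (Suc n) (cdiff n k) p = (\<lambda>_. 0)" using F by (simp add: jh_def)
      ultimately show ?thesis by simp
    qed
  qed
qed

lemma jv_chain: "jv (Suc n) (cdiff n k) = dTot n (jv n k)"
proof (rule ext)
  fix p
  show "jv (Suc n) (cdiff n k) p = dTot n (jv n k) p"
  proof (cases "p = Suc n")
    case True
    then show ?thesis by (auto simp: jv_def dTot_def dh_def cdiff_def fun_eq_iff)
  next
    case False
    note F = False
    show ?thesis
    proof (cases "p = n")
      case True
      have "dv n 0 (jv n k n) = (\<lambda>_. 0)"
        by (auto simp: dv_def jv_def fun_eq_iff sgnop_def)
      moreover have "n \<noteq> 0 \<Longrightarrow> jv n k (n - 1) = (\<lambda>_. 0)" by (cases n) (simp_all add: jv_def)
      moreover have "n \<noteq> 0 \<Longrightarrow> n - 1 \<noteq> n" by simp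
      moreover have "jv (Suc n) (cdiff n k) n = (\<lambda>_. 0)" by (simp add: jv_def)
      ultimately show ?thesis unfolding True by (cases n) (auto simp: dTot_def zero_fun_def)
    next
      case False
      then have "p \<noteq> 0 \<Longrightarrow> jv n k (p - 1) = (\<lambda>_. 0)" "jv n k p = (\<lambda>_. 0)" using F
        by (cases p; auto simp: jv_def)+
      then have "dTot n (jv n k) p = (\<lambda>_. 0)" unfolding dTot_def by (simp add: zero_fun_def)
      moreover have "jv (Suc n) (cdiff n k) p = (\<lambda>_. 0)" using F by (simp add: jv_def)
      ultimately show ?thesis by simp
    qed
  qed
qed


definition fr :: "nat \<Rightarrow> (nat \<Rightarrow> 'g) \<Rightarrow> (nat \<Rightarrow> 'g)" where
  "fr p y = restrict y {..p}"
definition bk :: "nat \<Rightarrow> nat \<Rightarrow> (nat \<Rightarrow> 'g) \<Rightarrow> (nat \<Rightarrow> 'g)" where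
  "bk p n y = restrict (\<lambda>k. y (p + k)) {..n - p}"
definition Psi :: "nat \<Rightarrow> (nat \<Rightarrow> (nat\<Rightarrow>'g)\<times>(nat\<Rightarrow>'g) \<Rightarrow> 'a::ab_group_add) \<Rightarrow> ((nat\<Rightarrow>'g) \<Rightarrow> 'a)" where
  "Psi n F = (\<lambda>y. if y \<in> tuples n then \<Sum>p\<le>n. F p (fr p y, bk p n y) else 0)"

lemma fr_tuples[simp]: "fr p y \<in> tuples p" by (simp add: fr_def)
lemma bk_tuples[simp]: "bk p n y \<in> tuples (n - p)" by (simp add: bk_def)

lemma face_fr: "i \<le> p \<Longrightarrow> p \<le> m \<Longrightarrow> face p i (fr (Suc p) y) = fr p (face m i y)"
  by (auto simp: face_def fr_def fun_eq_iff)
lemma bk_face: "i \<le> p \<Longrightarrow> p \<le> m \<Longrightarrow> bk (Suc p) (Suc m) y = bk p m (face m i y)"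
  by (auto simp: face_def bk_def fun_eq_iff)
lemma face_fr_last: "face p (Suc p) (fr (Suc p) y) = fr p y"
  by (auto simp: face_def fr_def fun_eq_iff)
lemma face_bk_0: "p \<le> m \<Longrightarrow> face (m - p) 0 (bk p (Suc m) y) = bk (Suc p) (Suc m) y"
  by (auto simp: face_def bk_def fun_eq_iff)
lemma fr_face_hi: "p \<le> m \<Longrightarrow> fr p (face m (Suc (p + j)) y) = fr p y"
  by (auto simp: face_def fr_def fun_eq_iff)
lemma bk_face_hi: "p \<le> m \<Longrightarrow> bk p m (face m (Suc (p + j)) y) = face (m - p) (Suc j) (bk p (Suc m) y)"
  by (auto simp: face_def bk_def fun_eq_iff)

lemma sum_split_atMost:
  "(\<Sum>i\<le>Suc (p + r). h i) = (\<Sum>i\<le>p. h i) + (\<Sum>j\<le>r. (h (Suc p + j) :: 'a::comm_monoid_add))"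
  by (induction r) (simp_all add: add.assoc)

lemma sum_split_atMost':
  assumes "p \<le> m"
  shows "(\<Sum>i\<le>Suc m. h i) = (\<Sum>i\<le>p. h i) + (\<Sum>j\<le>m - p. (h (Suc p + j) :: 'a::comm_monoid_add))"
  using sum_split_atMost[of h p "m - p"] assms by simp

lemma Psi_add: "Psi n (U + V) = Psi n U + Psi n V"
  by (auto simp: Psi_def fun_eq_iff sum.distrib)

lemma jh_comp: "jh n f p z = (if p = 0 then jh n f 0 z else 0)"
  by (simp add: jh_def)

lemma Psi_jh:
  assumes "\<And>x. x \<notin> tuples n \<Longrightarrow> f x = 0"
  shows "Psi n (jh n f) = f"
proof (rule ext)
  fix y
  show "Psi n (jh n f) y = f y"
  proof (cases "y \<in> tuples n")
    case True
    have "bk 0 n y = y" using True unfolding bk_def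
      by (intro tuples_eqI) auto
    then have "(\<Sum>p\<le>n. jh n f p (fr p y, bk p n y)) = f y"
      using True by (subst jh_comp) (simp add: jh_def)
    then show ?thesis using True by (simp add: Psi_def)
  qed (simp add: Psi_def assms)
qed

lemma Psi_per_p:
  fixes G :: "(nat\<Rightarrow>'g)\<times>(nat\<Rightarrow>'g) \<Rightarrow> 'a::ab_group_add"
  assumes pm: "p \<le> m"
  shows "dh p (m - p) G (fr (Suc p) y, bk (Suc p) (Suc m) y) + dv p (m - p) G (fr p y, bk p (Suc m) y)
       = (\<Sum>i\<le>Suc m. sgnop i (G (fr p (face m i y), bk p m (face m i y))))"
proof -
  let ?h = "\<lambda>i. sgnop i (G (fr p (face m i y), bk p m (face m i y)))"
  let ?X = "G (fr p y, bk (Suc p) (Suc m) y)"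
  have t1: "bk (Suc p) (Suc m) y \<in> tuples (m - p)" using bk_tuples[of "Suc p" "Suc m" y] by simp
  have t2: "bk p (Suc m) y \<in> tuples (Suc (m - p))" using bk_tuples[of p "Suc m" y] pm by (simp add: Suc_diff_le)
  have "dh p (m - p) G (fr (Suc p) y, bk (Suc p) (Suc m) y)
      = (\<Sum>i\<le>Suc p. sgnop i (G (face p i (fr (Suc p) y), bk (Suc p) (Suc m) y)))"
    using t1 by (simp add: dh_def)
  also have "\<dots> = (\<Sum>i\<le>p. ?h i) + sgnop (Suc p) ?X"
  proof -
    have "(\<Sum>i\<le>p. sgnop i (G (face p i (fr (Suc p) y), bk (Suc p) (Suc m) y))) = (\<Sum>i\<le>p. ?h i)"
    proof (intro sum.cong refl)
      fix i assume "i \<in> {..p}"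
      then have "i \<le> p" by simp
      then show "sgnop i (G (face p i (fr (Suc p) y), bk (Suc p) (Suc m) y)) = ?h i"
        using face_fr[OF _ pm, of i y] bk_face[OF _ pm, of i y] by simp
    qed
    then show ?thesis by (simp add: face_fr_last)
  qed
  finally have DH: "dh p (m - p) G (fr (Suc p) y, bk (Suc p) (Suc m) y) = (\<Sum>i\<le>p. ?h i) + sgnop (Suc p) ?X" .
  have "dv p (m - p) G (fr p y, bk p (Suc m) y)
      = sgnop p (\<Sum>j\<le>Suc (m - p). sgnop j (G (fr p y, face (m - p) j (bk p (Suc m) y))))"
    using t2 by (simp add: dv_def)
  also have "\<dots> = sgnop p (?X + (\<Sum>j\<le>m - p. sgnop (Suc j) (G (fr p y, face (m - p) (Suc j) (bk p (Suc m) y)))))"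
    by (simp only: sum.atMost_Suc_shift) (simp add: face_bk_0 pm)
  also have "\<dots> = sgnop p ?X + (\<Sum>j\<le>m - p. ?h (Suc p + j))"
    by (simp add: sgnop_add sgnop_sum sgnop_sgnop fr_face_hi bk_face_hi pm)
  finally have DV: "dv p (m - p) G (fr p y, bk p (Suc m) y) = sgnop p ?X + (\<Sum>j\<le>m - p. ?h (Suc p + j))" .
  have "sgnop (Suc p) ?X + sgnop p ?X = 0" by (simp add: sgnop_Suc)
  then show ?thesis unfolding DH DV sum_split_atMost'[OF pm, of ?h]
    by (simp add: algebra_simps)
qed

lemma Psi_chain: "Psi (Suc m) (dTot m F) = cdiff m (Psi m F)"
proof (rule ext)
  fix y
  show "Psi (Suc m) (dTot m F) y = cdiff m (Psi m F) y"
  proof (cases "y \<in> tuples (Suc m)")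
    case False then show ?thesis by (simp add: Psi_def cdiff_def)
  next
    case True
    let ?A = "\<lambda>p. (if 1 \<le> p then dh (p - 1) (Suc m - p) (F (p - 1)) (fr p y, bk p (Suc m) y) else 0)"
    let ?B = "\<lambda>p. (if p \<le> m then dv p (m - p) (F p) (fr p y, bk p (Suc m) y) else 0)"
    have "Psi (Suc m) (dTot m F) y = (\<Sum>p\<le>Suc m. ?A p + ?B p)"
      using True unfolding Psi_def dTot_def by (auto intro!: sum.cong simp: plus_fun_def zero_fun_def)
    also have "\<dots> = (\<Sum>p\<le>Suc m. ?A p) + (\<Sum>p\<le>Suc m. ?B p)" by (rule sum.distrib)
    also have "(\<Sum>p\<le>Suc m. ?A p) = (\<Sum>p\<le>m. dh p (m - p) (F p) (fr (Suc p) y, bk (Suc p) (Suc m) y))"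
      by (simp only: sum.atMost_Suc_shift) simp
    also have "(\<Sum>p\<le>Suc m. ?B p) = (\<Sum>p\<le>m. dv p (m - p) (F p) (fr p y, bk p (Suc m) y))"
      by simp
    also have "(\<Sum>p\<le>m. dh p (m - p) (F p) (fr (Suc p) y, bk (Suc p) (Suc m) y)) +
               (\<Sum>p\<le>m. dv p (m - p) (F p) (fr p y, bk p (Suc m) y))
             = (\<Sum>p\<le>m. \<Sum>i\<le>Suc m. sgnop i (F p (fr p (face m i y), bk p m (face m i y))))"
      by (simp only: sum.distrib[symmetric]) (intro sum.cong refl Psi_per_p, simp)
    also have "\<dots> = (\<Sum>i\<le>Suc m. sgnop i (\<Sum>p\<le>m. F p (fr p (face m i y), bk p m (face m i y))))"
      by (subst sum.swap) (simp add: sgnop_sum)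
    also have "\<dots> = cdiff m (Psi m F) y"
      using True by (simp add: cdiff_def Psi_def)
    finally show ?thesis .
  qed
qed


definition cat :: "nat \<Rightarrow> nat \<Rightarrow> (nat \<Rightarrow> 'g) \<Rightarrow> (nat \<Rightarrow> 'g) \<Rightarrow> (nat \<Rightarrow> 'g)" where
  "cat p q x y = restrict (\<lambda>k. if k \<le> p then x k else y (k - Suc p)) {..Suc (p + q)}"

definition Kc :: "nat \<Rightarrow> ((nat \<Rightarrow> 'g) \<Rightarrow> 'a::ab_group_add) \<Rightarrow> nat \<Rightarrow> (nat \<Rightarrow> 'g) \<times> (nat \<Rightarrow> 'g) \<Rightarrow> 'a" where
  "Kc m f = (\<lambda>p. if p \<le> m then (\<lambda>(x,y). if x \<in> tuples p \<and> y \<in> tuples (m - p)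
       then sgnop (Suc p) (f (cat p (m - p) x y)) else 0) else (\<lambda>_. 0))"

lemma cat_tuples[simp]: "cat p q x y \<in> tuples (Suc (p + q))"
  by (simp add: cat_def)

lemma face_cat1: "i \<le> Suc p \<Longrightarrow> face (Suc p + q) i (cat (Suc p) q x y) = cat p q (face p i x) y"
  by (auto simp: face_def cat_def fun_eq_iff)

lemma face_cat2: "y \<in> tuples q \<Longrightarrow> face q 0 (cat 0 q x y) = y"
  by (rule tuples_eqI[of _ q]) (auto simp: face_def cat_def)

lemma face_cat3: "face (p + Suc q) (Suc (p + j)) (cat p (Suc q) x y) = cat p q x (face q j y)"
  apply (auto simp: face_def cat_def fun_eq_iff)
  apply (rule arg_cong[where f=y])
  by arith

lemma face_cat4: "x \<in> tuples p \<Longrightarrow> face p (Suc p) (cat p 0 x y) = x"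
  by (rule tuples_eqI[of _ p]) (auto simp: face_def cat_def)

lemma cocycle_sum:
  assumes "cdiff n f = 0" "w \<in> tuples (Suc n)"
  shows "(\<Sum>i\<le>Suc n. sgnop i (f (face n i w))) = 0"
  using fun_cong[OF assms(1), of w] assms(2) by (simp add: cdiff_def)

lemma K_identity:
  fixes f :: "(nat \<Rightarrow> 'g) \<Rightarrow> 'a::ab_group_add"
  assumes cc: "cdiff (Suc m) f = 0"
  shows "jv (Suc m) f = jh (Suc m) f + dTot m (Kc m f)"
proof (intro ext)
  fix p and z :: "(nat \<Rightarrow> 'g) \<times> (nat \<Rightarrow> 'g)"
  obtain x y where z: "z = (x, y)" by fastforce
  show "jv (Suc m) f p z = (jh (Suc m) f + dTot m (Kc m f)) p z"
  proof -
    consider "Suc m < p" | "p = 0" | "p = Suc m" | "1 \<le> p" "p \<le> m" by linarith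
    then show ?thesis
    proof cases
      case 1 then show ?thesis by (simp add: jv_def jh_def dTot_def)
    next
      case 2
      have D: "dTot m (Kc m f) 0 = dv 0 m (Kc m f 0)" by (simp add: dTot_def)
      show ?thesis
      proof (cases "x \<in> tuples 0 \<and> y \<in> tuples (Suc m)")
        case False
        then show ?thesis using 2 z D by (auto simp: jv_def jh_def dv_def)
      next
        case True
        define w where "w = cat 0 (Suc m) x y"
        have "(\<Sum>i\<le>Suc (Suc m). sgnop i (f (face (Suc m) i w))) = 0"
          by (rule cocycle_sum[OF cc]) (use cat_tuples[of 0 "Suc m" x y] in \<open>simp add: w_def\<close>)
        then have "f (face (Suc m) 0 w) + (\<Sum>j\<le>Suc m. sgnop (Suc j) (f (face (Suc m) (Suc j) w))) = 0"
          by (simp only: sum.atMost_Suc_shift) simp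
        moreover have "face (Suc m) 0 w = y" unfolding w_def by (rule face_cat2) (use True in simp)
        moreover have "face (Suc m) (Suc j) w = cat 0 m x (face m j y)" for j
          using face_cat3[of 0 m j x y] unfolding w_def by simp
        ultimately have E: "f y + (\<Sum>j\<le>Suc m. sgnop (Suc j) (f (cat 0 m x (face m j y)))) = 0" by simp
        have "dv 0 m (Kc m f 0) (x, y) = (\<Sum>j\<le>Suc m. sgnop j (sgnop (Suc 0) (f (cat 0 m x (face m j y)))))"
          using True by (simp add: dv_def Kc_def)
        also have "\<dots> = (\<Sum>j\<le>Suc m. sgnop (Suc j) (f (cat 0 m x (face m j y))))"
          by (simp add: sgnop_sgnop)
        also have "\<dots> = - f y" using E by (simp add: eq_neg_iff_add_eq_0 add.commute)
        finally have "dv 0 m (Kc m f 0) (x, y) = - f y" .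
        then show ?thesis using 2 z D True by (simp add: jv_def jh_def)
      qed
    next
      case 3
      have D: "dTot m (Kc m f) (Suc m) = dh m 0 (Kc m f m)" by (simp add: dTot_def)
      show ?thesis
      proof (cases "x \<in> tuples (Suc m) \<and> y \<in> tuples 0")
        case False
        then show ?thesis using 3 z D by (auto simp: jv_def jh_def dh_def)
      next
        case True
        define w where "w = cat (Suc m) 0 x y"
        have "(\<Sum>i\<le>Suc (Suc m). sgnop i (f (face (Suc m) i w))) = 0"
          by (rule cocycle_sum[OF cc]) (use cat_tuples[of "Suc m" 0 x y] in \<open>simp add: w_def\<close>)
        then have "(\<Sum>i\<le>Suc m. sgnop i (f (face (Suc m) i w))) + sgnop (Suc (Suc m)) (f (face (Suc m) (Suc (Suc m)) w)) = 0"
          by simp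
        moreover have "face (Suc m) (Suc (Suc m)) w = x" unfolding w_def by (rule face_cat4) (use True in simp)
        moreover have "face (Suc m) i w = cat m 0 (face m i x) y" if "i \<le> Suc m" for i
          using face_cat1[OF that, of 0 x y] unfolding w_def by simp
        ultimately have E: "(\<Sum>i\<le>Suc m. sgnop i (f (cat m 0 (face m i x) y))) + sgnop (Suc (Suc m)) (f x) = 0"
          by simp
        have "dh m 0 (Kc m f m) (x, y) = (\<Sum>i\<le>Suc m. sgnop i (sgnop (Suc m) (f (cat m 0 (face m i x) y))))"
          using True by (simp add: dh_def Kc_def)
        also have "\<dots> = sgnop (Suc m) (\<Sum>i\<le>Suc m. sgnop i (f (cat m 0 (face m i x) y)))"
          by (subst sgnop_sum, rule sum.cong, simp, simp add: sgnop_sgnop add.commute)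
        also have "\<dots> = sgnop (Suc m) (- sgnop (Suc (Suc m)) (f x))"
          by (rule arg_cong[where f="sgnop (Suc m)"], rule eq_neg_iff_add_eq_0[THEN iffD2, OF E])
        also have "\<dots> = f x" by (simp add: sgnop_def)
        finally have "dh m 0 (Kc m f m) (x, y) = f x" .
        then show ?thesis using 3 z D True by (simp add: jv_def jh_def)
      qed
    next
      case 4
      define p' where "p' = p - 1"
      define q' where "q' = m - p"
      have pq: "p = Suc p'" "m = Suc p' + q'" using 4 unfolding p'_def q'_def by arith+
      have D: "dTot m (Kc m f) p = dh p' (Suc q') (Kc m f p') + dv p q' (Kc m f p)"
        using pq by (simp add: dTot_def plus_fun_def)
      have J: "jv (Suc m) f p = (\<lambda>_. 0)" "jh (Suc m) f p = (\<lambda>_. 0)" using pq by (simp_all add: jv_def jh_def)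
      show ?thesis
      proof (cases "x \<in> tuples p \<and> y \<in> tuples (Suc q')")
        case False
        then show ?thesis using z D J pq by (auto simp: dh_def dv_def)
      next
        case True
        define w where "w = cat p (Suc q') x y"
        let ?S1 = "(\<Sum>i\<le>p. sgnop i (f (cat p' (Suc q') (face p' i x) y)))"
        let ?S2 = "(\<Sum>j\<le>Suc q'. sgnop (Suc p + j) (f (cat p q' x (face q' j y))))"
        have C: "(\<Sum>i\<le>Suc (Suc m). sgnop i (f (face (Suc m) i w))) = 0"
          by (rule cocycle_sum[OF cc]) (use cat_tuples[of p "Suc q'" x y] pq in \<open>simp add: w_def\<close>)
        have "Suc (Suc m) = Suc (p + Suc q')" using pq by simp
        then have C2: "(\<Sum>i\<le>Suc (Suc m). sgnop i (f (face (Suc m) i w))) =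
           (\<Sum>i\<le>p. sgnop i (f (face (Suc m) i w))) + (\<Sum>j\<le>Suc q'. sgnop (Suc p + j) (f (face (Suc m) (Suc p + j) w)))"
          using sum_split_atMost[of "\<lambda>i. sgnop i (f (face (Suc m) i w))" p "Suc q'"] by (simp only:)
        have F1: "face (Suc m) i w = cat p' (Suc q') (face p' i x) y" if "i \<le> p" for i
          using face_cat1[of i p' "Suc q'" x y] that pq unfolding w_def by simp
        have F3: "face (Suc m) (Suc p + j) w = cat p q' x (face q' j y)" for j
          using face_cat3[of p q' j x y] pq unfolding w_def by simp
        have "(\<Sum>i\<le>p. sgnop i (f (face (Suc m) i w))) = ?S1"
          by (rule sum.cong) (simp_all add: F1)
        moreover have "(\<Sum>j\<le>Suc q'. sgnop (Suc p + j) (f (face (Suc m) (Suc p + j) w))) = ?S2"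
          by (rule sum.cong) (simp_all only: F3)
        ultimately have E: "?S1 + ?S2 = 0" using C C2 by simp
        have "dh p' (Suc q') (Kc m f p') (x, y) = (\<Sum>i\<le>p. sgnop i (sgnop p (f (cat p' (Suc q') (face p' i x) y))))"
          using True pq by (simp add: dh_def Kc_def del: sum.atMost_Suc)
        also have "\<dots> = sgnop p ?S1"
          by (subst sgnop_sum, rule sum.cong, simp, simp add: sgnop_sgnop add.commute)
        finally have DH: "dh p' (Suc q') (Kc m f p') (x, y) = sgnop p ?S1" .
        have "dv p q' (Kc m f p) (x, y) = sgnop p (\<Sum>j\<le>Suc q'. sgnop j (sgnop (Suc p) (f (cat p q' x (face q' j y)))))"
          using True pq by (simp add: dv_def Kc_def del: sum.atMost_Suc)
        also have "\<dots> = sgnop p ?S2"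
          by (rule arg_cong[where f="sgnop p"], rule sum.cong, simp, simp add: sgnop_sgnop add.commute)
        finally have DV: "dv p q' (Kc m f p) (x, y) = sgnop p ?S2" .
        have "dTot m (Kc m f) p (x, y) = sgnop p ?S1 + sgnop p ?S2"
          using D DH DV by simp
        also have "\<dots> = sgnop p (?S1 + ?S2)" by (rule sgnop_add[symmetric])
        also have "\<dots> = 0" unfolding E by simp
        finally have "dTot m (Kc m f) p (x, y) = 0" .
        then show ?thesis using z J by simp
      qed
    qed
  qed
qed


context
  fixes act :: "'g::{topological_space,group_add} \<Rightarrow> 'a::{topological_space,ab_group_add} \<Rightarrow> 'a"
  assumes TM: "top_G_module act"
begin

lemma act_zero: "act g 0 = 0"
  using TM unfolding top_G_module_def by (metis add_cancel_right_right)

lemma act_add: "act g (a + b) = act g a + act g b"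
  using TM unfolding top_G_module_def by blast

lemma act_uminus: "act g (- a) = - act g a"
  using act_add[of g a "- a"] act_zero by (simp add: eq_neg_iff_add_eq_0 add.commute)

lemma act_sgnop: "act g (sgnop i a) = sgnop i (act g a)"
  by (simp add: sgnop_def act_uminus)

lemma act_sum: "act g (sum h A) = (\<Sum>x\<in>A. act g (h x))"
  by (induction A rule: infinite_finite_induct) (simp_all add: act_zero act_add)

lemma cont_add:
  assumes "continuous_map X euclidean f" "continuous_map X euclidean g"
  shows "continuous_map X euclidean (\<lambda>x. f x + (g x :: 'a))"
proof -
  have "continuous_map X (prod_topology euclidean euclidean) (\<lambda>x. (f x, g x))"
    using assms by (rule continuous_map_pairedI)
  moreover have "continuous_map euclidean euclidean (\<lambda>z::'a\<times>'a. fst z + snd z)"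
    using TM unfolding top_G_module_def by simp
  ultimately show ?thesis using continuous_map_compose[of X _ "\<lambda>x. (f x, g x)" euclidean "\<lambda>z::'a\<times>'a. fst z + snd z"]
    by (simp add: o_def)
qed

lemma cont_uminus:
  assumes "continuous_map X euclidean f"
  shows "continuous_map X euclidean (\<lambda>x. - (f x :: 'a))"
proof -
  have "continuous_map euclidean euclidean (\<lambda>a::'a. - a)"
    using TM unfolding top_G_module_def by simp
  then have "continuous_map X euclidean ((\<lambda>a::'a. - a) \<circ> f)" by (rule continuous_map_compose[OF assms])
  then show ?thesis by (simp add: o_def)
qed

lemma cont_sgnop:
  assumes "continuous_map X euclidean f"
  shows "continuous_map X euclidean (\<lambda>x. sgnop i (f x :: 'a))"
  using assms cont_uminus[OF assms] by (simp add: sgnop_def)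

lemma Clc_subgrp: "subgrp (Clc act n)"
  unfolding subgrp_def
proof (intro conjI ballI)
  show "0 \<in> Clc act n"
    unfolding Clc_def equivariant_def
    by (auto simp: act_zero zero_fun_def intro!: exI[of _ UNIV] simp: identity_nbhd_def)
next
  fix u v assume u: "u \<in> Clc act n" and v: "v \<in> Clc act n"
  obtain U where U: "identity_nbhd U" "continuous_map (subtopology (PT n) (Gamma U n)) euclidean u"
    using u unfolding Clc_def by blast
  obtain V where V: "identity_nbhd V" "continuous_map (subtopology (PT n) (Gamma V n)) euclidean v"
    using v unfolding Clc_def by blast
  have "continuous_map (subtopology (PT n) (Gamma (U \<inter> V) n)) euclidean (\<lambda>x. u x + v x)"
    by (intro cont_add continuous_map_from_subtopology_mono[OF U(2)] continuous_map_from_subtopology_mono[OF V(2)])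
      (auto simp: Gamma_def)
  moreover have "identity_nbhd (U \<inter> V)" using U(1) V(1) unfolding identity_nbhd_def
    by (metis Int_mono open_Int IntI)
  ultimately show "u + v \<in> Clc act n" using u v unfolding Clc_def equivariant_def
    by (auto simp: act_add plus_fun_def intro!: exI[of _ "U \<inter> V"])
next
  fix u assume u: "u \<in> Clc act n"
  obtain U where U: "identity_nbhd U" "continuous_map (subtopology (PT n) (Gamma U n)) euclidean u"
    using u unfolding Clc_def by blast
  have "continuous_map (subtopology (PT n) (Gamma U n)) euclidean (\<lambda>x. - u x)"
    by (rule cont_uminus[OF U(2)])
  then show "- u \<in> Clc act n" using u U(1) unfolding Clc_def equivariant_def
    by (auto simp: act_uminus fun_Compl_def intro!: exI[of _ U])
qed

lemma Alc_subgrp: "subgrp (Alc_fix act p q)"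
  unfolding subgrp_def
proof (intro conjI ballI)
  show "0 \<in> Alc_fix act p q"
    unfolding Alc_fix_def
    by (auto simp: act_zero zero_fun_def intro!: exI[of _ UNIV] simp: identity_nbhd_def)
next
  fix u v assume u: "u \<in> Alc_fix act p q" and v: "v \<in> Alc_fix act p q"
  obtain U where U: "identity_nbhd U" "continuous_map (subtopology (prod_topology (PT p) (PT q)) (tuples p \<times> Gamma U q)) euclidean u"
    using u unfolding Alc_fix_def by blast
  obtain V where V: "identity_nbhd V" "continuous_map (subtopology (prod_topology (PT p) (PT q)) (tuples p \<times> Gamma V q)) euclidean v"
    using v unfolding Alc_fix_def by blast
  have "continuous_map (subtopology (prod_topology (PT p) (PT q)) (tuples p \<times> Gamma (U \<inter> V) q)) euclidean (\<lambda>x. u x + v x)"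
    by (intro cont_add continuous_map_from_subtopology_mono[OF U(2)] continuous_map_from_subtopology_mono[OF V(2)])
      (auto simp: Gamma_def)
  moreover have "identity_nbhd (U \<inter> V)" using U(1) V(1) unfolding identity_nbhd_def
    by (metis Int_mono open_Int IntI)
  ultimately show "u + v \<in> Alc_fix act p q" using u v unfolding Alc_fix_def
    by (auto simp: act_add plus_fun_def intro!: exI[of _ "U \<inter> V"])
next
  fix u assume u: "u \<in> Alc_fix act p q"
  obtain U where U: "identity_nbhd U" "continuous_map (subtopology (prod_topology (PT p) (PT q)) (tuples p \<times> Gamma U q)) euclidean u"
    using u unfolding Alc_fix_def by blast
  have "continuous_map (subtopology (prod_topology (PT p) (PT q)) (tuples p \<times> Gamma U q)) euclidean (\<lambda>x. - u x)"
    by (rule cont_uminus[OF U(2)])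
  then show "- u \<in> Alc_fix act p q" using u U(1) unfolding Alc_fix_def
    by (auto simp: act_uminus fun_Compl_def intro!: exI[of _ U])
qed

lemma Tot_subgrp: "subgrp (Tot act n)"
  using Alc_subgrp unfolding subgrp_def Tot_def
  by (auto simp: zero_fun_def[symmetric])

lemma Gamma_tuples: "Gamma U q \<subseteq> tuples q"
  by (auto simp: Gamma_def)

lemma topspace_PT[simp]: "topspace (PT n) = tuples n"
  by (simp add: PT_def tuples_def)

lemma inbhd_UNIV: "identity_nbhd UNIV"
  by (auto simp: identity_nbhd_def)

lemma zero_Cc: "0 \<in> Cc act n"
  unfolding Cc_def equivariant_def by (auto simp: act_zero zero_fun_def)

lemma Cc_Clc: "Cc act n \<subseteq> Clc act n"
  unfolding Cc_def Clc_def by (auto intro!: exI[of _ UNIV] inbhd_UNIV continuous_map_from_subtopology)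

lemma zero_Alc: "(\<lambda>_. 0) \<in> Alc_fix act p q"
  using Alc_subgrp[of p q] unfolding subgrp_def by (simp add: zero_fun_def)

lemma jh_Tot:
  assumes f: "f \<in> Clc act n"
  shows "jh n f \<in> Tot act n"
proof -
  obtain U where U: "identity_nbhd U" "continuous_map (subtopology (PT n) (Gamma U n)) euclidean f"
    using f unfolding Clc_def by blast
  let ?X = "subtopology (prod_topology (PT 0) (PT n)) (tuples 0 \<times> Gamma U n)"
  have "continuous_map ?X (subtopology (PT n) (Gamma U n)) snd"
    by (rule continuous_map_into_subtopology[OF continuous_map_subtopology_snd]) auto
  then have c: "continuous_map ?X euclidean (f \<circ> snd)" using U(2) by (rule continuous_map_compose)
  have "continuous_map ?X euclidean (jh n f 0)"
    by (rule continuous_map_eq[OF c]) (use Gamma_tuples in \<open>auto simp: jh_def\<close>)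
  then have "jh n f 0 \<in> Alc_fix act 0 n"
    using f U(1) unfolding Alc_fix_def Clc_def equivariant_def by (auto simp: jh_def)
  then show ?thesis unfolding Tot_def using zero_Alc by (auto simp: jh_def zero_fun_def)
qed

lemma jv_Tot:
  assumes f: "f \<in> Cc act n"
  shows "jv n f \<in> Tot act n"
proof -
  let ?X = "subtopology (prod_topology (PT n) (PT 0)) (tuples n \<times> Gamma UNIV 0)"
  have "continuous_map ?X (PT n) fst"
    by (rule continuous_map_subtopology_fst)
  then have c: "continuous_map ?X euclidean (f \<circ> fst)" using f unfolding Cc_def by (blast intro: continuous_map_compose)
  have "continuous_map ?X euclidean (jv n f n)"
    by (rule continuous_map_eq[OF c]) (use Gamma_tuples in \<open>auto simp: jv_def\<close>)
  then have "jv n f n \<in> Alc_fix act n 0"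
    using f inbhd_UNIV unfolding Alc_fix_def Cc_def equivariant_def by (auto simp: jv_def)
  then show ?thesis unfolding Tot_def using zero_Alc by (auto simp: jv_def zero_fun_def)
qed

lemma fr_tmul: "p \<le> n \<Longrightarrow> fr p (tmul n g y) = tmul p g (fr p y)"
  by (auto simp: fr_def tmul_def fun_eq_iff)
lemma bk_tmul: "p \<le> n \<Longrightarrow> bk p n (tmul n g y) = tmul (n - p) g (bk p n y)"
  by (auto simp: bk_def tmul_def fun_eq_iff)
lemma cat_tmul: "cat p q (tmul p g x) (tmul q g y) = tmul (Suc (p + q)) g (cat p q x y)"
  by (auto simp: cat_def tmul_def fun_eq_iff)

lemma cont_fr: "p \<le> n \<Longrightarrow> continuous_map (PT n) (PT p) (fr p)"
  unfolding PT_def continuous_map_componentwise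
proof (intro conjI ballI)
  show "fr p ` topspace (product_topology (\<lambda>_. euclidean) {..n}) \<subseteq> extensional {..p}"
    by (auto simp: fr_def)
  fix k assume k: "k \<in> {..p}" and "p \<le> n"
  then have "continuous_map (product_topology (\<lambda>_. euclidean) {..n}) euclidean (\<lambda>x. x k)"
    by (intro continuous_map_product_projection) auto
  then show "continuous_map (product_topology (\<lambda>_. euclidean) {..n}) euclidean (\<lambda>x. fr p x k)"
    by (rule continuous_map_eq) (use k in \<open>simp add: fr_def\<close>)
qed

lemma cont_bk: "p \<le> n \<Longrightarrow> continuous_map (PT n) (PT (n - p)) (bk p n)"
  unfolding PT_def continuous_map_componentwise
proof (intro conjI ballI)
  show "bk p n ` topspace (product_topology (\<lambda>_. euclidean) {..n}) \<subseteq> extensional {..n - p}"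
    by (auto simp: bk_def)
  fix k assume k: "k \<in> {..n - p}" and pn: "p \<le> n"
  have "continuous_map (product_topology (\<lambda>_. euclidean) {..n}) euclidean (\<lambda>x. x (p + k))"
    using k pn by (intro continuous_map_product_projection) auto
  then show "continuous_map (product_topology (\<lambda>_. euclidean) {..n}) euclidean (\<lambda>x. bk p n x k)"
    by (rule continuous_map_eq) (use k in \<open>simp add: bk_def\<close>)
qed

lemma cont_cat: "continuous_map (prod_topology (PT p) (PT q)) (PT (Suc (p + q))) (\<lambda>z. cat p q (fst z) (snd z))"
  unfolding PT_def continuous_map_componentwise
proof (intro conjI ballI)
  show "(\<lambda>z. cat p q (fst z) (snd z)) ` topspace (prod_topology (product_topology (\<lambda>_. euclidean) {..p}) (product_topology (\<lambda>_. euclidean) {..q}))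
    \<subseteq> extensional {..Suc (p + q)}"
    by (auto simp: cat_def)
  fix k assume k: "k \<in> {..Suc (p + q)}"
  show "continuous_map (prod_topology (product_topology (\<lambda>_. euclidean) {..p}) (product_topology (\<lambda>_. euclidean) {..q})) euclidean
         (\<lambda>z. cat p q (fst z) (snd z) k)"
  proof (cases "k \<le> p")
    case True
    have "continuous_map (prod_topology (product_topology (\<lambda>_. euclidean) {..p}) (product_topology (\<lambda>_. euclidean) {..q})) euclidean
         ((\<lambda>x. x k) \<circ> fst)"
      by (rule continuous_map_compose[OF continuous_map_fst]) (use True in \<open>intro continuous_map_product_projection, simp\<close>)
    then show ?thesis by (rule continuous_map_eq) (use k True in \<open>simp add: cat_def\<close>)
  next
    case False
    have "continuous_map (prod_topology (product_topology (\<lambda>_. euclidean) {..p}) (product_topology (\<lambda>_. euclidean) {..q})) euclidean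
         ((\<lambda>x. x (k - Suc p)) \<circ> snd)"
      by (rule continuous_map_compose[OF continuous_map_snd]) (use False k in \<open>intro continuous_map_product_projection, simp\<close>)
    then show ?thesis by (rule continuous_map_eq) (use k False in \<open>simp add: cat_def\<close>)
  qed
qed

lemma cont_sum:
  assumes "\<And>i. i \<in> A \<Longrightarrow> continuous_map X euclidean (f i)"
  shows "continuous_map X euclidean (\<lambda>x. \<Sum>i\<in>A. (f i x :: 'a))"
  using assms
proof (induction A rule: infinite_finite_induct)
  case (insert a A)
  then show ?case by (simp add: cont_add)
qed simp_all

lemma inbhd_INT:
  assumes "finite A" "\<And>i. i \<in> A \<Longrightarrow> identity_nbhd (U i)"
  shows "identity_nbhd (\<Inter>i\<in>A. U i)"
  using assms
proof (induction A rule: finite_induct)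
  case empty then show ?case by (simp add: inbhd_UNIV)
next
  case (insert a A)
  then have "identity_nbhd (U a)" "identity_nbhd (\<Inter>i\<in>A. U i)" by auto
  then obtain V W where "open V" "0 \<in> V" "V \<subseteq> U a" "open W" "0 \<in> W" "W \<subseteq> (\<Inter>i\<in>A. U i)"
    unfolding identity_nbhd_def by blast
  then show ?case unfolding identity_nbhd_def
    by (intro exI[of _ "V \<inter> W"]) auto
qed

lemma bk_Gamma:
  assumes "y \<in> Gamma U n" "U \<subseteq> V" "p \<le> n"
  shows "bk p n y \<in> Gamma V (n - p)"
proof (cases "n - p = 0")
  case True then show ?thesis using bk_tuples[of p n y] by (simp add: Gamma_def)
next
  case False
  then have "n \<noteq> 0" by simp
  then have "\<forall>i\<le>n. \<forall>j\<le>n. - y i + y j \<in> U" using assms(1) by (simp add: Gamma_def)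
  then show ?thesis using False assms(2,3) by (auto simp: Gamma_def bk_def)
qed

lemma Psi_Clc:
  assumes F: "F \<in> Tot act n"
  shows "Psi n F \<in> Clc act n"
proof -
  have "\<forall>p\<in>{..n}. \<exists>U. identity_nbhd U \<and>
      continuous_map (subtopology (prod_topology (PT p) (PT (n - p))) (tuples p \<times> Gamma U (n - p))) euclidean (F p)"
    using F unfolding Tot_def Alc_fix_def by auto
  then obtain Uf where Uf: "\<And>p. p \<in> {..n} \<Longrightarrow> identity_nbhd (Uf p)"
    "\<And>p. p \<in> {..n} \<Longrightarrow> continuous_map (subtopology (prod_topology (PT p) (PT (n - p))) (tuples p \<times> Gamma (Uf p) (n - p))) euclidean (F p)"
    by metis
  define U where "U = (\<Inter>p\<in>{..n}. Uf p)"
  have U: "identity_nbhd U" unfolding U_def by (rule inbhd_INT) (use Uf in auto)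
  let ?X = "subtopology (PT n) (Gamma U n)"
  have cp: "continuous_map ?X euclidean (\<lambda>y. F p (fr p y, bk p n y))" if p: "p \<in> {..n}" for p
  proof -
    have pn: "p \<le> n" using p by simp
    have "continuous_map ?X (prod_topology (PT p) (PT (n - p))) (\<lambda>y. (fr p y, bk p n y))"
      by (intro continuous_map_pairedI continuous_map_from_subtopology cont_fr cont_bk pn)
    then have "continuous_map ?X (subtopology (prod_topology (PT p) (PT (n - p))) (tuples p \<times> Gamma (Uf p) (n - p))) (\<lambda>y. (fr p y, bk p n y))"
      by (rule continuous_map_into_subtopology) (use bk_Gamma[OF _ _ pn] p in \<open>auto simp: U_def\<close>)
    then have "continuous_map ?X euclidean (F p \<circ> (\<lambda>y. (fr p y, bk p n y)))"
      using Uf(2)[OF p] by (rule continuous_map_compose)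
    then show ?thesis by (simp add: o_def)
  qed
  have "continuous_map ?X euclidean (\<lambda>y. \<Sum>p\<le>n. F p (fr p y, bk p n y))"
    by (rule cont_sum) (rule cp)
  then have C: "continuous_map ?X euclidean (Psi n F)"
    by (rule continuous_map_eq) (use Gamma_tuples in \<open>auto simp: Psi_def\<close>)
  have E: "equivariant act n (Psi n F)"
    unfolding equivariant_def
  proof (intro allI ballI)
    fix g and y :: "nat \<Rightarrow> 'g" assume y: "y \<in> tuples n"
    have "act g (Psi n F (tmul n (- g) y)) = (\<Sum>p\<le>n. act g (F p (tmul p (- g) (fr p y), tmul (n - p) (- g) (bk p n y))))"
      by (simp add: Psi_def act_sum fr_tmul bk_tmul)
    also have "\<dots> = (\<Sum>p\<le>n. F p (fr p y, bk p n y))"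
    proof (rule sum.cong)
      fix p assume "p \<in> {..n}"
      then have "F p \<in> Alc_fix act p (n - p)" using F unfolding Tot_def by simp
      then show "act g (F p (tmul p (- g) (fr p y), tmul (n - p) (- g) (bk p n y))) = F p (fr p y, bk p n y)"
        unfolding Alc_fix_def by simp
    qed simp
    finally show "act g (Psi n F (tmul n (- g) y)) = Psi n F y" using y by (simp add: Psi_def)
  qed
  show ?thesis unfolding Clc_def using C E U by (auto simp: Psi_def)
qed

lemma Kc_Tot:
  assumes f: "f \<in> Cc act (Suc m)"
  shows "Kc m f \<in> Tot act m"
  unfolding Tot_def
proof (intro CollectI conjI allI impI)
  fix p assume "m < p" then show "Kc m f p = 0" by (simp add: Kc_def zero_fun_def)
next
  fix p assume pm: "p \<le> m"
  let ?X = "subtopology (prod_topology (PT p) (PT (m - p))) (tuples p \<times> Gamma UNIV (m - p))"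
  have "continuous_map (prod_topology (PT p) (PT (m - p))) (PT (Suc m)) (\<lambda>z. cat p (m - p) (fst z) (snd z))"
    using cont_cat[of p "m - p"] pm by simp
  then have "continuous_map (prod_topology (PT p) (PT (m - p))) euclidean (f \<circ> (\<lambda>z. cat p (m - p) (fst z) (snd z)))"
    using f unfolding Cc_def by (blast intro: continuous_map_compose)
  then have "continuous_map ?X euclidean (\<lambda>z. sgnop (Suc p) (f (cat p (m - p) (fst z) (snd z))))"
    by (intro cont_sgnop continuous_map_from_subtopology) (simp add: o_def)
  then have C: "continuous_map ?X euclidean (Kc m f p)"
    by (rule continuous_map_eq) (use Gamma_tuples pm in \<open>auto simp: Kc_def\<close>)
  have E: "act g (Kc m f p (tmul p (- g) x, tmul (m - p) (- g) y)) = Kc m f p (x, y)"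
    if "x \<in> tuples p" "y \<in> tuples (m - p)" for g x y
  proof -
    have "cat p (m - p) (tmul p (- g) x) (tmul (m - p) (- g) y) = tmul (Suc m) (- g) (cat p (m - p) x y)"
      using cat_tmul[of p "m - p" "- g" x y] pm by simp
    moreover have "act g (f (tmul (Suc m) (- g) (cat p (m - p) x y))) = f (cat p (m - p) x y)"
      using f cat_tuples[of p "m - p" x y] pm unfolding Cc_def equivariant_def by simp
    ultimately show ?thesis using that pm by (simp add: Kc_def act_sgnop)
  qed
  show "Kc m f p \<in> Alc_fix act p (m - p)"
    unfolding Alc_fix_def using C E inbhd_UNIV pm by (auto simp: Kc_def)
qed

end

lemma M1: assumes "top_group TYPE('g::{topological_space,group_add})" "top_G_module (act::'g \<Rightarrow> 'a::{topological_space,ab_group_add} \<Rightarrow> 'a)"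
  shows "subgrp (Clc act n)" "subgrp (Tot act n)"
  by (rule Clc_subgrp[OF assms(2)], rule Tot_subgrp[OF assms(2)])
lemma M2: assumes "top_G_module act" shows "Cc act n \<subseteq> Clc act n" by (rule Cc_Clc[OF assms])
lemma M3: "cdiff n (u + v) = cdiff n u + cdiff n v" "dTot n (U + V) = dTot n U + dTot n V"
  by (rule cdiff_add, rule dTot_add)
lemma M4: "jh n (u + v) = jh n u + jh n (v::(nat\<Rightarrow>'g)\<Rightarrow>'a::ab_group_add)" "jh (Suc n) (cdiff n k) = dTot n (jh n k)"
  by (rule jh_add, rule jh_chain)
lemma M5: "jv n (u + v) = jv n u + jv n (v::(nat\<Rightarrow>'g)\<Rightarrow>'a::ab_group_add)" "jv (Suc n) (cdiff n k) = dTot n (jv n k)"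
  by (rule jv_add, rule jv_chain)
lemma M6: assumes "top_group TYPE('g::{topological_space,group_add})" "top_G_module (act::'g \<Rightarrow> 'a::{topological_space,ab_group_add} \<Rightarrow> 'a)"
  shows "f \<in> Clc act n \<Longrightarrow> jh n f \<in> Tot act n" "f \<in> Cc act n \<Longrightarrow> jv n f \<in> Tot act n"
  by (rule jh_Tot[OF assms(2)], assumption, rule jv_Tot[OF assms(2)], assumption)
lemma M7: assumes "top_group TYPE('g::{topological_space,group_add})" "top_G_module (act::'g \<Rightarrow> 'a::{topological_space,ab_group_add} \<Rightarrow> 'a)"
  shows "Psi n (U + V) = Psi n U + Psi n V" "Psi (Suc n) (dTot n F) = cdiff n (Psi n F)"
    "F \<in> Tot act n \<Longrightarrow> Psi n F \<in> Clc act n" "(\<And>x. x \<notin> tuples n \<Longrightarrow> f x = 0) \<Longrightarrow> Psi n (jh n f) = f"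
  by (rule Psi_add, rule Psi_chain, rule Psi_Clc[OF assms(2)], assumption, rule Psi_jh, blast)

lemma cocycle0:
  fixes f :: "(nat \<Rightarrow> 'g) \<Rightarrow> 'a::ab_group_add"
  assumes cc: "cdiff 0 f = 0"
  shows "jv 0 f = jh 0 f"
proof (intro ext)
  fix p and z :: "(nat \<Rightarrow> 'g) \<times> (nat \<Rightarrow> 'g)"
  obtain x y where z: "z = (x, y)" by fastforce
  show "jv 0 f p z = jh 0 f p z"
  proof (cases "p = 0 \<and> x \<in> tuples 0 \<and> y \<in> tuples 0")
    case True
    define w where "w = cat 0 0 x y"
    have "(\<Sum>i\<le>Suc 0. sgnop i (f (face 0 i w))) = 0"
      by (rule cocycle_sum[OF cc]) (use cat_tuples[of 0 0 x y] in \<open>simp add: w_def\<close>)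
    moreover have "face 0 0 w = y" unfolding w_def by (rule face_cat2) (use True in simp)
    moreover have "face 0 (Suc 0) w = x" unfolding w_def by (rule face_cat4) (use True in simp)
    ultimately have "f y + - f x = 0" by (simp add: sgnop_def)
    then have "f x = f y" by (simp add: algebra_simps)
    then show ?thesis using True z by (simp add: jv_def jh_def)
  next
    case False then show ?thesis using z by (auto simp: jv_def jh_def)
  qed
qed

lemma M8: assumes "top_group TYPE('g::{topological_space,group_add})" "top_G_module (act::'g \<Rightarrow> 'a::{topological_space,ab_group_add} \<Rightarrow> 'a)"
  shows "f \<in> Cc act (Suc m) \<Longrightarrow> cdiff (Suc m) f = 0 \<Longrightarrow> \<exists>K\<in>Tot act m. jv (Suc m) f = jh (Suc m) f + dTot m K"
    "f \<in> Cc act 0 \<Longrightarrow> cdiff 0 f = 0 \<Longrightarrow> jv 0 f = jh 0 f"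
  using Kc_Tot[OF assms(2)] K_identity cocycle0 by blast+

theorem mainTheorem5:
  fixes act :: "'g::{topological_space,group_add} \<Rightarrow> 'a::{topological_space,ab_group_add} \<Rightarrow> 'a"
    and p :: nat
  assumes "top_group TYPE('g)"
    and "top_G_module act"
  shows "\<forall>c \<in> cohomology (Cc act) cdiff p.
           inv_into (cohomology (Clc act) cdiff p) (induced jh (Tot act) dTot p)
              (induced jv (Tot act) dTot p c)
         = induced (\<lambda>n f. f) (Clc act) cdiff p c"
proof
  note A = assms
  have SC: "subgrp (coboundaries (Clc act) cdiff n)" for n
    by (rule cob_subgrp) (rule M1(1)[OF A], rule M3(1))
  have ST: "subgrp (coboundaries (Tot act) dTot n)" for n
    by (rule cob_subgrp) (rule M1(2)[OF A], rule M3(2))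
  have jh0: "jh n (0::(nat\<Rightarrow>'g)\<Rightarrow>'a) = 0" for n by (rule additive_zero[of "jh n"]) (rule M4(1))
  have jv0: "jv n (0::(nat\<Rightarrow>'g)\<Rightarrow>'a) = 0" for n by (rule additive_zero[of "jv n"]) (rule M5(1))
  have Psi0: "Psi n (0::nat \<Rightarrow> (nat\<Rightarrow>'g)\<times>(nat\<Rightarrow>'g)\<Rightarrow>'a) = 0" for n by (rule additive_zero[of "Psi n"]) (rule M7(1)[OF A])
  have jhB: "jh n b \<in> coboundaries (Tot act) dTot n" if hb: "b \<in> coboundaries (Clc act) cdiff n" for b n
  proof (cases "n = 0")
    case True then show ?thesis using hb jh0 by (simp add: coboundaries_def)
  next
    case False
    then obtain k where k: "k \<in> Clc act (n-1)" "b = cdiff (n-1) k" using hb by (auto simp: coboundaries_def)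
    have "jh n b = dTot (n-1) (jh (n-1) k)" using M4(2)[of "n-1" k] False k by simp
    then show ?thesis using False M6(1)[OF A k(1)] by (simp add: coboundaries_def)
  qed
  have jvB: "jv n b \<in> coboundaries (Tot act) dTot n" if hb: "b \<in> coboundaries (Cc act) cdiff n" for b n
  proof (cases "n = 0")
    case True then show ?thesis using hb jv0 by (simp add: coboundaries_def)
  next
    case False
    then obtain k where k: "k \<in> Cc act (n-1)" "b = cdiff (n-1) k" using hb by (auto simp: coboundaries_def)
    have "jv n b = dTot (n-1) (jv (n-1) k)" using M5(2)[of "n-1" k] False k by simp
    then show ?thesis using False M6(2)[OF A k(1)] by (simp add: coboundaries_def)
  qed
  have PsiB: "Psi n b \<in> coboundaries (Clc act) cdiff n" if hb: "b \<in> coboundaries (Tot act) dTot n" for b n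
  proof (cases "n = 0")
    case True then show ?thesis using hb Psi0 by (simp add: coboundaries_def)
  next
    case False
    then obtain k where k: "k \<in> Tot act (n-1)" "b = dTot (n-1) k" using hb by (auto simp: coboundaries_def)
    have "Psi n b = cdiff (n-1) (Psi (n-1) k)" using M7(2)[OF A, of "n-1" k] False k by simp
    then show ?thesis using False M7(3)[OF A k(1)] by (simp add: coboundaries_def)
  qed
  have CB: "coboundaries (Cc act) cdiff n \<subseteq> coboundaries (Clc act) cdiff n" for n
    using M2[OF assms(2)] by (auto simp: coboundaries_def)
  have inj: "inj_on (induced jh (Tot act) dTot p) (cohomology (Clc act) cdiff p)"
  proof (rule inj_onI)
    fix x1 x2 assume x1: "x1 \<in> cohomology (Clc act) cdiff p" and x2: "x2 \<in> cohomology (Clc act) cdiff p"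
      and eq: "induced jh (Tot act) dTot p x1 = induced jh (Tot act) dTot p x2"
    obtain w1 where w1: "w1 \<in> cocycles (Clc act) cdiff p" "x1 = coh_class (Clc act) cdiff p w1"
      using x1 by (auto simp: cohomology_def)
    obtain w2 where w2: "w2 \<in> cocycles (Clc act) cdiff p" "x2 = coh_class (Clc act) cdiff p w2"
      using x2 by (auto simp: cohomology_def)
    define s1 where "s1 = (SOME z. z \<in> x1)"
    define s2 where "s2 = (SOME z. z \<in> x2)"
    have "s1 \<in> x1" unfolding s1_def by (rule someI[of _ w1]) (use w1 self_mem_class[OF SC] in auto)
    then obtain b1 where b1: "b1 \<in> coboundaries (Clc act) cdiff p" "s1 = w1 + b1"
      using w1 by (auto simp: coh_class_def)
    have "s2 \<in> x2" unfolding s2_def by (rule someI[of _ w2]) (use w2 self_mem_class[OF SC] in auto)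
    then obtain b2 where b2: "b2 \<in> coboundaries (Clc act) cdiff p" "s2 = w2 + b2"
      using w2 by (auto simp: coh_class_def)
    have s1C: "s1 x = 0" if "x \<notin> tuples p" for x
      using b1 w1 that unfolding cocycles_def coboundaries_def Clc_def
      by (cases "p = 0") (auto simp: cdiff_def)
    have s2C: "s2 x = 0" if "x \<notin> tuples p" for x
      using b2 w2 that unfolding cocycles_def coboundaries_def Clc_def
      by (cases "p = 0") (auto simp: cdiff_def)
    have x1s: "x1 = coh_class (Clc act) cdiff p s1" using class_mem[OF SC \<open>s1 \<in> x1\<close>[unfolded w1(2)]] w1 by simp
    have x2s: "x2 = coh_class (Clc act) cdiff p s2" using class_mem[OF SC \<open>s2 \<in> x2\<close>[unfolded w2(2)]] w2 by simp
    have "coh_class (Tot act) dTot p (jh p s1) = coh_class (Tot act) dTot p (jh p s2)"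
      using eq unfolding induced_def s1_def s2_def by simp
    then have "jh p s1 \<in> coh_class (Tot act) dTot p (jh p s2)" using self_mem_class[OF ST] by metis
    then obtain \<beta> where \<beta>: "\<beta> \<in> coboundaries (Tot act) dTot p" "jh p s1 = jh p s2 + \<beta>"
      by (auto simp: coh_class_def)
    have "s1 = Psi p (jh p s1)" using M7(4)[OF A, of p s1] s1C by simp
    also have "\<dots> = Psi p (jh p s2) + Psi p \<beta>" using \<beta>(2) M7(1)[OF A] by simp
    also have "\<dots> = s2 + Psi p \<beta>" using M7(4)[OF A, of p s2] s2C by simp
    finally have "s1 = s2 + Psi p \<beta>" .
    then have "coh_class (Clc act) cdiff p s1 = coh_class (Clc act) cdiff p s2"
      using class_shift2[OF SC PsiB[OF \<beta>(1)]] by simp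
    then show "x1 = x2" using x1s x2s by simp
  qed
  fix c assume c: "c \<in> cohomology (Cc act) cdiff p"
  then obtain f where f: "f \<in> cocycles (Cc act) cdiff p" "c = coh_class (Cc act) cdiff p f"
    by (auto simp: cohomology_def)
  have fC: "f \<in> Cc act p" "cdiff p f = 0" using f by (auto simp: cocycles_def)
  have fC': "f \<in> cocycles (Clc act) cdiff p" using fC M2[OF assms(2)] by (auto simp: cocycles_def)
  define z0 where "z0 = (SOME z. z \<in> c)"
  have "0 \<in> coboundaries (Clc act) cdiff p" using SC unfolding subgrp_def by blast
  have "0 \<in> coboundaries (Cc act) cdiff p"
  proof (cases "p = 0")
    case False
    have "cdiff (p-1) 0 = 0" by (rule additive_zero[of "cdiff (p-1)"]) (rule M3(1))
    moreover have "(0::(nat\<Rightarrow>'g)\<Rightarrow>'a) \<in> Cc act (p-1)"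
      by (rule zero_Cc[OF assms(2)])
    ultimately show ?thesis using False unfolding coboundaries_def by (metis image_eqI)
  qed (simp add: coboundaries_def)
  then have "f \<in> c" unfolding f(2) coh_class_def by (intro CollectI exI[of _ 0]) simp
  then have "z0 \<in> c" unfolding z0_def by (rule someI[where P="\<lambda>z. z \<in> c"])
  then obtain b where b: "b \<in> coboundaries (Cc act) cdiff p" "z0 = f + b"
    using f by (auto simp: coh_class_def)
  have R: "induced (\<lambda>n f. f) (Clc act) cdiff p c = coh_class (Clc act) cdiff p f"
    unfolding induced_def z0_def[symmetric] using class_shift2[OF SC _ b(2)] b(1) CB by blast
  have L: "induced jv (Tot act) dTot p c = coh_class (Tot act) dTot p (jv p f)"
    unfolding induced_def z0_def[symmetric] by (rule class_shift2[OF ST jvB[OF b(1)]]) (simp add: b(2) M5(1))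
  define x0 where "x0 = coh_class (Clc act) cdiff p f"
  have x0: "x0 \<in> cohomology (Clc act) cdiff p" using fC' unfolding x0_def cohomology_def by blast
  define w where "w = (SOME z. z \<in> x0)"
  have "w \<in> x0" unfolding w_def by (rule someI[of _ f]) (use self_mem_class[OF SC] x0_def in auto)
  then obtain b' where b': "b' \<in> coboundaries (Clc act) cdiff p" "w = f + b'"
    by (auto simp: coh_class_def x0_def)
  have hx0: "induced jh (Tot act) dTot p x0 = coh_class (Tot act) dTot p (jh p f)"
    unfolding induced_def w_def[symmetric] by (rule class_shift2[OF ST jhB[OF b'(1)]]) (simp add: b'(2) M4(1))
  have hv: "coh_class (Tot act) dTot p (jh p f) = coh_class (Tot act) dTot p (jv p f)"
  proof (cases p)
    case 0 then show ?thesis using M8(2)[OF A] fC by simp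
  next
    case (Suc m)
    then obtain K where K: "K \<in> Tot act m" "jv p f = jh p f + dTot m K" using M8(1)[OF A] fC by blast
    have "dTot m K \<in> coboundaries (Tot act) dTot p" using K Suc by (auto simp: coboundaries_def)
    then show ?thesis using class_shift2[OF ST _ K(2)] by metis
  qed
  show "inv_into (cohomology (Clc act) cdiff p) (induced jh (Tot act) dTot p)
              (induced jv (Tot act) dTot p c)
         = induced (\<lambda>n f. f) (Clc act) cdiff p c"
    unfolding L R x0_def[symmetric] by (rule inv_into_f_eq[OF inj x0]) (simp add: hx0 hv)
qed

end
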